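(* For every input word $u\in\{0,1,2\}^*$, the Berstel adder $\mathcal{B}$ outputs a binary word $\mathcal{B}(u)\cdot\mathcal{B}_{\downarrow}(u)\in\{0,1\}^*$ with \[ \mathrm{val}_{\mathcal{F}}(u)=\mathrm{val}_{\mathcal{F}}\big(\mathcal{B}(u)\cdot\mathcal{B}_{\downarrow}(u)\big). \]
   Context: Fibonacci numbers: $F_0=1$, $F_1=2$, $F_n=F_{n-1}+F_{n-2}$ for $n\ge2$. For a word $w=w_{k-1}\cdots w_0$ over $\{0,1,2\}$ (digits indexed from the right), $\mathrm{val}_{\mathcal{F}}(w)=\sum_{i=0}^{k-1}w_iF_i$, with $\mathrm{val}_{\mathcal F}(\varepsilon)=0$. A Mealy machine reads an input word from left to right starting in its initial state; each transition $p\xrightarrow{a/b}q$ reads letter $a$, outputs letter $b$ and moves to $q$. $M(u)$ is the concatenation of outputs, and $M_{\downarrow}(u)$ the extra output word of the state reached after reading $u$. The Berstel adder $\mathcal{B}$ has 10 states $000.0,\ 001.1,\ 001.2,\ 010.3,\ 010.4,\ 100.5,\ 100.6,\ 101.6,\ 101.7,\ 000.1$, initial state $000.0$, transitions: $000.0$: $0/0\to000.0$, $1/0\to001.2$, $2/0\to010.4$; $001.2$: $0/0\to010.3$, $1/0\to100.5$, $2/0\to101.7$; $010.4$: $0/0\to101.6$, $1/1\to000.0$, $2/1\to001.2$; $010.3$: $0/0\to100.5$, $1/0\to101.7$, $2/1\to000.1$; $100.5$: $0/1\to000.0$, $1/1\to001.2$, $2/1\to010.4$; $101.7$: $0/1\to010.3$,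 $1/1\to100.5$, $2/1\to101.7$; $101.6$: $0/1\to001.2$, $1/1\to010.4$, $2/1\to100.6$; $000.1$: $0/0\to001.1$, $1/0\to010.3$, $2/0\to100.5$; $100.6$: $0/1\to001.1$, $1/1\to010.3$, $2/1\to100.5$; $001.1$: $0/0\to001.2$, $1/0\to010.4$, $2/0\to100.6$. The extra output word of a state $xyz.j$ is $xyz$. *)

theory Defs
  imports Main
begin

fun F :: "nat \<Rightarrow> nat" where
  "F 0 = 1"
| "F (Suc 0) = 2"
| "F (Suc (Suc n)) = F (Suc n) + F n"

text \<open>Words are lists of digits written left to right, i.e. the list
  [w_(k-1), ..., w_0]; the last list element has index 0.\<close>
definition valF :: "nat list \<Rightarrow> nat" where
  "valF w = (\<Sum>i<length w. w ! (length w - 1 - i) * F i)"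

text \<open>States of the Berstel adder; S_xyz_j stands for state xyz.j.\<close>
datatype bstate = S000_0 | S001_1 | S001_2 | S010_3 | S010_4
  | S100_5 | S100_6 | S101_6 | S101_7 | S000_1

fun btrans :: "bstate \<Rightarrow> nat \<Rightarrow> nat \<times> bstate" where
  "btrans S000_0 a = (if a = 0 then (0, S000_0) else if a = 1 then (0, S001_2) else (0, S010_4))"
| "btrans S001_2 a = (if a = 0 then (0, S010_3) else if a = 1 then (0, S100_5) else (0, S101_7))"
| "btrans S010_4 a = (if a = 0 then (0, S101_6) else if a = 1 then (1, S000_0) else (1, S001_2))"
| "btrans S010_3 a = (if a = 0 then (0, S100_5) else if a = 1 then (0, S101_7) else (1, S000_1))"
| "btrans S100_5 a = (if a = 0 then (1, S000_0) else if a = 1 then (1, S001_2) else (1, S010_4))"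
| "btrans S101_7 a = (if a = 0 then (1, S010_3) else if a = 1 then (1, S100_5) else (1, S101_7))"
| "btrans S101_6 a = (if a = 0 then (1, S001_2) else if a = 1 then (1, S010_4) else (1, S100_6))"
| "btrans S000_1 a = (if a = 0 then (0, S001_1) else if a = 1 then (0, S010_3) else (0, S100_5))"
| "btrans S100_6 a = (if a = 0 then (1, S001_1) else if a = 1 then (1, S010_3) else (1, S100_5))"
| "btrans S001_1 a = (if a = 0 then (0, S001_2) else if a = 1 then (0, S010_4) else (0, S100_6))"

fun bfinal :: "bstate \<Rightarrow> nat list" where
  "bfinal S000_0 = [0,0,0]"
| "bfinal S001_1 = [0,0,1]"
| "bfinal S001_2 = [0,0,1]"
| "bfinal S010_3 = [0,1,0]"
| "bfinal S010_4 = [0,1,0]"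
| "bfinal S100_5 = [1,0,0]"
| "bfinal S100_6 = [1,0,0]"
| "bfinal S101_6 = [1,0,1]"
| "bfinal S101_7 = [1,0,1]"
| "bfinal S000_1 = [0,0,0]"

fun brun :: "bstate \<Rightarrow> nat list \<Rightarrow> nat list \<times> bstate" where
  "brun q [] = ([], q)"
| "brun q (a # u) = (let (b, q') = btrans q a; (v, r) = brun q' u in (b # v, r))"

definition B_out :: "nat list \<Rightarrow> nat list" where
  "B_out u = fst (brun S000_0 u)"

definition B_final :: "nat list \<Rightarrow> nat list" where
  "B_final u = bfinal (snd (brun S000_0 u))"

end

theory Submission
  imports Defs
begin

fun vr :: "(nat \<Rightarrow> int) \<Rightarrow> nat list \<Rightarrow> int" where
  "vr G [] = 0"
| "vr G (a # w) = int a * G (length w) + vr G w"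

lemma valF_vr: "int (valF w) = vr (\<lambda>i. int (F i)) w"
proof (induction w)
  case Nil thus ?case by (simp add: valF_def)
next
  case (Cons a w)
  have "valF (a # w) = a * F (length w) + valF w"
    unfolding valF_def
    by (simp add: lessThan_Suc Suc_diff_le nth_Cons' add.commute)
  thus ?case using Cons by simp
qed

lemma vr_snoc: "vr G (w @ [a]) = int a * G 0 + vr (\<lambda>i. G (Suc i)) w"
  by (induction w) auto

definition stp :: "int \<times> int \<Rightarrow> nat \<Rightarrow> int \<times> int" where
  "stp p a = (snd p + int a, fst p + snd p)"

definition co :: "nat list \<Rightarrow> int \<times> int" where
  "co w = foldl stp (0, 0) w"

lemma co_snoc: "co (w @ [a]) = stp (co w) a"
  by (simp add: co_def)

lemma co_app: "co (w @ xs) = foldl stp (co w) xs"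
  by (simp add: co_def)

lemma vr_co: "\<forall>G. (\<forall>n. G (Suc (Suc n)) = G (Suc n) + G n) \<longrightarrow>
   vr G w = fst (co w) * G 0 + snd (co w) * G 1"
proof (induction w rule: rev_induct)
  case Nil thus ?case by (simp add: co_def)
next
  case (snoc a w)
  show ?case
  proof (intro allI impI)
    fix G :: "nat \<Rightarrow> int" assume g: "\<forall>n. G (Suc (Suc n)) = G (Suc n) + G n"
    have g': "\<forall>n. G (Suc (Suc (Suc n))) = G (Suc (Suc n)) + G (Suc n)" using g by blast
    have "vr (\<lambda>i. G (Suc i)) w = fst (co w) * G 1 + snd (co w) * G 2"
      using snoc.IH g' by (simp add: numeral_2_eq_2)
    moreover have "G 2 = G 1 + G 0" using g[rule_format, of 0] by (simp add: numeral_2_eq_2)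
    ultimately show "vr G (w @ [a]) = fst (co (w @ [a])) * G 0 + snd (co (w @ [a])) * G 1"
      by (simp add: vr_snoc co_snoc stp_def algebra_simps)
  qed
qed

lemma valF_co: "int (valF w) = fst (co w) + 2 * snd (co w)"
proof -
  have "\<forall>n. int (F (Suc (Suc n))) = int (F (Suc n)) + int (F n)" by simp
  thus ?thesis using vr_co[of w] valF_vr[of w] by simp
qed

lemma brun_snoc: "brun q (u @ [a]) =
  (let (v, r) = brun q u; (b, r') = btrans r a in (v @ [b], r'))"
  by (induction u arbitrary: q) (auto simp: split_beta)

fun cst :: "bstate \<Rightarrow> int \<times> int" where
  "cst S000_0 = (0,0)" | "cst S001_2 = (1,0)" | "cst S010_4 = (2,0)"
| "cst S010_3 = (0,1)" | "cst S100_5 = (1,1)" | "cst S101_7 = (2,1)"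
| "cst S101_6 = (0,2)" | "cst S000_1 = (2,-1)" | "cst S100_6 = (3,0)"
| "cst S001_1 = (-1,1)"

lemma inv: "set u \<subseteq> {0,1,2} \<Longrightarrow>
  set (fst (brun S000_0 u)) \<subseteq> {0,1} \<and>
  co u = (fst (co (fst (brun S000_0 u) @ [0,0,0])) + fst (cst (snd (brun S000_0 u))),
          snd (co (fst (brun S000_0 u) @ [0,0,0])) + snd (cst (snd (brun S000_0 u))))"
proof (induction u rule: rev_induct)
  case Nil thus ?case by (simp add: co_def stp_def)
next
  case (snoc a u)
  obtain v r where vr: "brun S000_0 u = (v, r)" by fastforce
  obtain A B where AB: "co v = (A, B)" by fastforce
  have IH: "set v \<subseteq> {0,1}" "co u = (fst (co (v @ [0,0,0])) + fst (cst r),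
          snd (co (v @ [0,0,0])) + snd (cst r))" using snoc vr by auto
  have a: "a = 0 \<or> a = 1 \<or> a = 2" using snoc.prems by auto
  have c3: "\<And>w x y z. co (w @ [x,y,z]) = stp (stp (stp (co w) x) y) z"
    by (simp add: co_def)
  have c4: "\<And>w b. co (w @ [b,0,0,0]) = stp (stp (stp (stp (co w) b) 0) 0) 0"
    by (simp add: co_def)
  show ?case using IH a
    apply (simp add: brun_snoc vr co_app AB split: prod.splits)
    apply (cases r; auto simp: stp_def split: prod.splits)
    done
qed

theorem theorem2:
  fixes u :: "nat list"
  assumes "set u \<subseteq> {0, 1, 2}"
  shows "set (B_out u @ B_final u) \<subseteq> {0, 1} \<and> valF u = valF (B_out u @ B_final u)"
proof -
  obtain v r where vr: "brun S000_0 u = (v, r)" by fastforce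
  obtain A B where AB: "co v = (A, B)" by fastforce
  have I: "set v \<subseteq> {0,1}" "co u = (fst (co (v @ [0,0,0])) + fst (cst r),
          snd (co (v @ [0,0,0])) + snd (cst r))" using inv[OF assms] vr by auto
  have c3: "\<And>w x y z. co (w @ [x,y,z]) = stp (stp (stp (co w) x) y) z"
    by (simp add: co_def)
  have fin: "set (bfinal r) \<subseteq> {0,1}" by (cases r) auto
  have "int (valF u) = int (valF (v @ bfinal r))"
    unfolding valF_co using I(2)
    by (cases r) (simp_all add: co_app AB stp_def)
  thus ?thesis using I(1) fin vr by (simp add: B_out_def B_final_def)
qed

end
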